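(* Consider $n$ independent Bernoulli trials, each succeeding with probability $p$, and let $X$ be the number of successes. If $p\ge 1/2$, then $\Pr(X\ge n/2)\ge p$. *)

theory Defs
  imports "HOL-Probability.Probability"
begin

end

theory Submission
  imports Defs
begin

definition bb :: "real \<Rightarrow> nat \<Rightarrow> nat \<Rightarrow> real" where
  "bb p n k = real (n choose k) * p ^ k * (1 - p) ^ (n - k)"

definition GG :: "real \<Rightarrow> nat \<Rightarrow> nat \<Rightarrow> real" where
  "GG p n t = (\<Sum>k<t. bb p n k)"

lemma bb_Suc_Suc: "bb p (Suc n) (Suc k) = p * bb p n k + (1 - p) * bb p n (Suc k)"
proof (cases "k < n")
  case True
  then have h: "n - k = Suc (n - Suc k)" by simp
  show ?thesis unfolding bb_def diff_Suc_Suc h binomial_Suc_Suc of_nat_add power_Suc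
    by (simp add: algebra_simps)
next
  case False
  then have "n choose Suc k = 0" by simp
  then show ?thesis unfolding bb_def using False by (simp add: algebra_simps)
qed

lemma bb_0: "bb p (Suc n) 0 = (1 - p) * bb p n 0"
  unfolding bb_def by simp

lemma GG_rec: "GG p (Suc n) (Suc t) = p * GG p n t + (1 - p) * GG p n (Suc t)"
proof -
  have "GG p (Suc n) (Suc t) = bb p (Suc n) 0 + (\<Sum>k<t. bb p (Suc n) (Suc k))"
    unfolding GG_def sum.lessThan_Suc_shift by simp
  also have "\<dots> = (1 - p) * bb p n 0 + p * (\<Sum>k<t. bb p n k) + (1 - p) * (\<Sum>k<t. bb p n (Suc k))"
    by (simp add: bb_Suc_Suc bb_0 sum.distrib sum_distrib_left)
  also have "\<dots> = p * GG p n t + (1 - p) * GG p n (Suc t)"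
    unfolding GG_def sum.lessThan_Suc_shift by (simp add: algebra_simps)
  finally show ?thesis .
qed

lemma GG_Suc: "GG p n (Suc t) = GG p n t + bb p n t"
  unfolding GG_def by simp

lemma bb_nonneg: "0 \<le> p \<Longrightarrow> p \<le> 1 \<Longrightarrow> 0 \<le> bb p n k"
  unfolding bb_def by simp

lemma odd_case:
  assumes "p \<le> 1" "p \<ge> 1/2"
  shows "GG p (2*m+1) (m+1) \<le> 1 - p"
proof (induction m)
  case 0
  then show ?case by (simp add: GG_def bb_def)
next
  case (Suc m)
  define q where "q = 1 - p"
  define A where "A = GG p (2*m+1) m"
  define B where "B = GG p (2*m+1) (m+1)"
  define C where "C = GG p (2*m+1) (m+2)"
  have e1: "GG p (2*Suc m+1) (Suc m+1) = p * GG p (2*m+2) (m+1) + q * GG p (2*m+2) (m+2)"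
    using GG_rec[of p "2*m+2" "m+1"] by (simp add: q_def)
  have e2: "GG p (2*m+2) (m+1) = p * A + q * B"
    using GG_rec[of p "2*m+1" m] by (simp add: q_def A_def B_def)
  have e3: "GG p (2*m+2) (m+2) = p * B + q * C"
    using GG_rec[of p "2*m+1" "m+1"] by (simp add: q_def B_def C_def)
  have eB: "B = A + bb p (2*m+1) m" using GG_Suc[of p "2*m+1" m] by (simp add: A_def B_def)
  have eC: "C = B + bb p (2*m+1) (m+1)" using GG_Suc[of p "2*m+1" "m+1"] by (simp add: C_def B_def)
  have ch: "(2*m+1) choose m = (2*m+1) choose (m+1)"
    using binomial_symmetric[of m "2*m+1"] by simp
  define c where "c = real ((2*m+1) choose m)"
  have bm: "bb p (2*m+1) m = c * p^m * q^(m+1)"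
    unfolding bb_def c_def q_def by (simp add: Suc_diff_le)
  have bm1: "bb p (2*m+1) (m+1) = c * p^(m+1) * q^m"
    unfolding bb_def c_def q_def ch by simp
  have pq: "p + q = 1" by (simp add: q_def)
  have key: "p^2 * bb p (2*m+1) m \<ge> q^2 * bb p (2*m+1) (m+1)"
  proof -
    have "p^2 * bb p (2*m+1) m - q^2 * bb p (2*m+1) (m+1) = c * p^(m+1) * q^(m+1) * (p - q)"
      unfolding bm bm1 by (simp add: algebra_simps power2_eq_square)
    also have "\<dots> \<ge> 0" using assms by (simp add: c_def q_def)
    finally show ?thesis by simp
  qed
  have "GG p (2*Suc m+1) (Suc m+1) = p * (p * A + q * B) + q * (p * B + q * C)"
    using e1 e2 e3 by simp
  also have "\<dots> = B - p^2 * bb p (2*m+1) m + q^2 * bb p (2*m+1) (m+1)"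
  proof -
    show ?thesis using eB eC unfolding q_def by (simp add: algebra_simps power2_eq_square)
  qed
  also have "\<dots> \<le> B" using key by simp
  also have "B \<le> 1 - p" using Suc B_def by simp
  finally show ?case .
qed

lemma prob_eq:
  assumes "0 \<le> p" "p \<le> 1"
  shows "measure_pmf.prob (binomial_pmf n p) {k. t \<le> k} = 1 - GG p n t"
proof -
  have eq: "UNIV - {..<t} = {k. t \<le> k}" by auto
  have "measure_pmf.prob (binomial_pmf n p) (UNIV - {..<t}) = 1 - measure_pmf.prob (binomial_pmf n p) {..<t}"
    using measure_pmf.prob_compl[of "{..<t}" "binomial_pmf n p"] by simp
  then have "measure_pmf.prob (binomial_pmf n p) {k. t \<le> k} = 1 - measure_pmf.prob (binomial_pmf n p) {..<t}"
    unfolding eq .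
  also have "measure_pmf.prob (binomial_pmf n p) {..<t} = GG p n t"
    using assms by (simp add: measure_measure_pmf_finite GG_def bb_def)
  finally show ?thesis .
qed

theorem lemma8:
  fixes n :: nat and p :: real
  assumes "p \<le> 1" and "p \<ge> 1/2"
  shows "measure_pmf.prob (binomial_pmf n p) {k. real k \<ge> real n / 2} \<ge> p"
proof -
  have p0: "0 \<le> p" using assms by simp
  obtain m where m: "n = 2*m \<or> n = 2*m+1" by (metis oddE evenE)
  show ?thesis
  proof (cases "n = 2*m")
    case True
    have "{k. real k \<ge> real n / 2} = {k. m \<le> k}" using True by auto
    moreover have "GG p (2*m) m \<le> 1 - p"
    proof -
      have "GG p (2*m+1) (m+1) = p * GG p (2*m) m + (1 - p) * GG p (2*m) (m+1)"
        using GG_rec[of p "2*m" m] by simp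
      moreover have "GG p (2*m) m \<le> GG p (2*m) (m+1)"
        using GG_Suc[of p "2*m" m] bb_nonneg[OF p0 assms(1)] by simp
      moreover have "(1 - p) * GG p (2*m) m \<le> (1 - p) * GG p (2*m) (m+1)"
        using assms calculation(2) by (intro mult_left_mono) auto
      ultimately have "GG p (2*m) m \<le> GG p (2*m+1) (m+1)"
        by (simp add: algebra_simps)
      then show ?thesis using odd_case[OF assms, of m] by simp
    qed
    ultimately show ?thesis using prob_eq[OF p0 assms(1)] True by simp
  next
    case False
    then have n: "n = 2*m+1" using m by simp
    have "{k. real k \<ge> real n / 2} = {k. m+1 \<le> k}" using n by auto
    then show ?thesis using prob_eq[OF p0 assms(1)] odd_case[OF assms, of m] n by simp
  qed
qed

end
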